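(* Let $(x_0:\ldots:x_4)\in\mathbf{P}^4(\mathbb{Q})$ with $x_0x_1x_2x_3x_4\neq0$. Then there is $w\in\mathbb{Q}$ with $w^2=(-3)\Delta'(x_0,\ldots,x_4)$ (for a, equivalently any, choice of rational homogeneous coordinates) if and only if the point $\iota((x_0:\ldots:x_4))=(1/x_0:\ldots:1/x_4)$ gives a $\mathbb{Q}$-rational point on the discriminantal covering, i.e. there is $w'\in\mathbb{Q}$ with $w'^2=(-3)\Delta(1/x_0,\ldots,1/x_4)$.
   Context: The discriminant is $$\Delta(a_0,\ldots,a_4):=\prod_{i_1,\ldots,i_4\in\{0,1\}}\Big(\sqrt{a_1a_2a_3a_4}+(-1)^{i_1}\sqrt{a_0a_2a_3a_4}+(-1)^{i_2}\sqrt{a_0a_1a_3a_4}+(-1)^{i_3}\sqrt{a_0a_1a_2a_4}+(-1)^{i_4}\sqrt{a_0a_1a_2a_3}\Big)\in\mathbb{Q}[a_0,\ldots,a_4]$$ (degree $32$), and $$\Delta'(x_0,\ldots,x_4):=\prod_{i_1,\ldots,i_4\in\{0,1\}}\big(\sqrt{x_0}+(-1)^{i_1}\sqrt{x_1}+(-1)^{i_2}\sqrt{x_2}+(-1)^{i_3}\sqrt{x_3}+(-1)^{i_4}\sqrt{x_4}\big)\in\mathbb{Q}[x_0,\ldots,x_4]$$ (degree $8$). The discriminantal covering is the double covering of $\mathbf{P}^4_{\mathbb{Q}}$ given by $w^2=-3\Delta(a_0,\ldots,a_4)$. The generalized Cremona transform is the birational map $\iota:\mathbf{P}^4\dashrightarrow\mathbf{P}^4$,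 $(a_0:\ldots:a_4)\mapsto(1/a_0:\ldots:1/a_4)$. *)

theory Defs
  imports Complex_Main
begin

text \<open>Since the product runs over all sign choices
  (and the number of factors is even), the product is independent of the branch chosen,
  and equals the value of the corresponding polynomial with rational coefficients.\<close>

definition Delta' :: "complex \<Rightarrow> complex \<Rightarrow> complex \<Rightarrow> complex \<Rightarrow> complex \<Rightarrow> complex" where
  "Delta' x0 x1 x2 x3 x4 =
     (\<Prod>i1\<in>{0,1::nat}. \<Prod>i2\<in>{0,1::nat}. \<Prod>i3\<in>{0,1::nat}. \<Prod>i4\<in>{0,1::nat}.
        csqrt x0 + (-1)^i1 * csqrt x1 + (-1)^i2 * csqrt x2
                 + (-1)^i3 * csqrt x3 + (-1)^i4 * csqrt x4)"

definition Delta :: "complex \<Rightarrow> complex \<Rightarrow> complex \<Rightarrow> complex \<Rightarrow> complex \<Rightarrow> complex" where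
  "Delta a0 a1 a2 a3 a4 =
     (\<Prod>i1\<in>{0,1::nat}. \<Prod>i2\<in>{0,1::nat}. \<Prod>i3\<in>{0,1::nat}. \<Prod>i4\<in>{0,1::nat}.
        csqrt (a1*a2*a3*a4) + (-1)^i1 * csqrt (a0*a2*a3*a4) + (-1)^i2 * csqrt (a0*a1*a3*a4)
          + (-1)^i3 * csqrt (a0*a1*a2*a4) + (-1)^i4 * csqrt (a0*a1*a2*a3))"

end

theory Submission
  imports Defs
begin

definition G :: "complex \<Rightarrow> complex \<Rightarrow> complex \<Rightarrow> complex \<Rightarrow> complex \<Rightarrow> complex" where
  "G s0 s1 s2 s3 s4 =
     (\<Prod>i1\<in>{0,1::nat}. \<Prod>i2\<in>{0,1::nat}. \<Prod>i3\<in>{0,1::nat}. \<Prod>i4\<in>{0,1::nat}.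
        s0 + (-1)^i1 * s1 + (-1)^i2 * s2 + (-1)^i3 * s3 + (-1)^i4 * s4)"

lemma G_hom: "G (c*s0) (c*s1) (c*s2) (c*s3) (c*s4) = c^16 * G s0 s1 s2 s3 s4"
proof -
  have e: "\<And>a b d e. c*s0 + a*(c*s1) + b*(c*s2) + d*(c*s3) + e*(c*s4) = c*(s0 + a*s1 + b*s2 + d*s3 + e*s4)"
    by (simp add: algebra_simps)
  have cd: "card {0,1::nat} = 2" by simp
  show ?thesis unfolding G_def e
    by (simp only: prod.distrib prod_constant cd power_mult_distrib mult.assoc flip: power_mult power_add) simp
qed

lemma G_n1: "G s0 (-s1) s2 s3 s4 = G s0 s1 s2 s3 s4"
  unfolding G_def by (simp add: mult.commute)
lemma pr2: "(\<Prod>i\<in>{0,1::nat}. f i) = (f 0 * f 1 :: complex)" by simp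
lemma G_n2: "G s0 s1 (-s2) s3 s4 = G s0 s1 s2 s3 s4"
  unfolding G_def by (simp only: pr2 power_0 power_one_right mult_1_left mult_minus1 minus_minus) (simp only: mult.assoc mult.commute mult.left_commute)
lemma G_n3: "G s0 s1 s2 (-s3) s4 = G s0 s1 s2 s3 s4"
  unfolding G_def by (simp only: pr2 power_0 power_one_right mult_1_left mult_minus1 minus_minus) (simp only: mult.assoc mult.commute mult.left_commute)
lemma G_n4: "G s0 s1 s2 s3 (-s4) = G s0 s1 s2 s3 s4"
  unfolding G_def by (simp add: ac_simps)
lemma G_n0: "G (-s0) s1 s2 s3 s4 = G s0 s1 s2 s3 s4"
proof -
  have "G (-s0) s1 s2 s3 s4 = G ((-1)*s0) ((-1)*(-s1)) ((-1)*(-s2)) ((-1)*(-s3)) ((-1)*(-s4))" by simp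
  also have "\<dots> = G s0 s1 s2 s3 s4" by (simp only: G_hom G_n1 G_n2 G_n3 G_n4) simp
  finally show ?thesis .
qed

lemma G_sq:
  assumes "t0^2 = u0^2" "t1^2 = u1^2" "t2^2 = u2^2" "t3^2 = u3^2" "t4^2 = u4^2"
  shows "G t0 t1 t2 t3 t4 = G u0 u1 u2 u3 u4"
proof -
  have "\<And>a b::complex. a^2 = b^2 \<Longrightarrow> a = b \<or> a = -b"
    by (metis power2_eq_iff)
  then have "t0 = u0 \<or> t0 = -u0" "t1 = u1 \<or> t1 = -u1" "t2 = u2 \<or> t2 = -u2"
     "t3 = u3 \<or> t3 = -u3" "t4 = u4 \<or> t4 = -u4" using assms by blast+
  then show ?thesis by (elim disjE) (simp_all add: G_n0 G_n1 G_n2 G_n3 G_n4)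
qed

theorem mainTheorem6:
  fixes x0 x1 x2 x3 x4 :: rat
  assumes "x0 * x1 * x2 * x3 * x4 \<noteq> 0"
  shows "(\<exists>w::rat. (of_rat w :: complex)^2
            = -3 * Delta' (of_rat x0) (of_rat x1) (of_rat x2) (of_rat x3) (of_rat x4))
     \<longleftrightarrow> (\<exists>w'::rat. (of_rat w' :: complex)^2
            = -3 * Delta (of_rat (1/x0)) (of_rat (1/x1)) (of_rat (1/x2)) (of_rat (1/x3)) (of_rat (1/x4)))"
proof -
  define P where "P = x0 * x1 * x2 * x3 * x4"
  have nz: "x0 \<noteq> 0" "x1 \<noteq> 0" "x2 \<noteq> 0" "x3 \<noteq> 0" "x4 \<noteq> 0" "P \<noteq> 0"
    using assms by (auto simp: P_def)
  define X0 where "X0 = (of_rat x0 :: complex)"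
  define X1 where "X1 = (of_rat x1 :: complex)"
  define X2 where "X2 = (of_rat x2 :: complex)"
  define X3 where "X3 = (of_rat x3 :: complex)"
  define X4 where "X4 = (of_rat x4 :: complex)"
  have Xnz: "X0 \<noteq> 0" "X1 \<noteq> 0" "X2 \<noteq> 0" "X3 \<noteq> 0" "X4 \<noteq> 0"
    using nz by (auto simp: X0_def X1_def X2_def X3_def X4_def)
  have PX: "(of_rat P :: complex) = X0*X1*X2*X3*X4"
    by (simp add: P_def X0_def X1_def X2_def X3_def X4_def of_rat_mult)
  define c where "c = 1 / csqrt (of_rat P)"
  have c2: "c^2 = 1 / (X0*X1*X2*X3*X4)"
    by (simp add: c_def power_divide PX)
  have inv: "\<And>x. (of_rat (1/x) :: complex) = 1 / of_rat x" by (simp add: of_rat_divide)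
  have D: "Delta (of_rat (1/x0)) (of_rat (1/x1)) (of_rat (1/x2)) (of_rat (1/x3)) (of_rat (1/x4))
      = c^16 * Delta' X0 X1 X2 X3 X4"
  proof -
    have "Delta (of_rat (1/x0)) (of_rat (1/x1)) (of_rat (1/x2)) (of_rat (1/x3)) (of_rat (1/x4))
      = G (csqrt (1/X1*(1/X2)*(1/X3)*(1/X4))) (csqrt (1/X0*(1/X2)*(1/X3)*(1/X4)))
          (csqrt (1/X0*(1/X1)*(1/X3)*(1/X4))) (csqrt (1/X0*(1/X1)*(1/X2)*(1/X4)))
          (csqrt (1/X0*(1/X1)*(1/X2)*(1/X3)))"
      unfolding Delta_def G_def inv X0_def X1_def X2_def X3_def X4_def ..
    also have "\<dots> = G (c * csqrt X0) (c * csqrt X1) (c * csqrt X2) (c * csqrt X3) (c * csqrt X4)"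
      by (rule G_sq) (use Xnz in \<open>simp_all add: power_mult_distrib c2 field_simps\<close>)
    also have "\<dots> = c^16 * G (csqrt X0) (csqrt X1) (csqrt X2) (csqrt X3) (csqrt X4)"
      by (rule G_hom)
    also have "G (csqrt X0) (csqrt X1) (csqrt X2) (csqrt X3) (csqrt X4) = Delta' X0 X1 X2 X3 X4"
      unfolding Delta'_def G_def ..
    finally show ?thesis .
  qed
  have c16: "c^16 = 1 / (of_rat (P^4))^2"
  proof -
    have "c^16 = (c^2)^8" by (simp flip: power_mult)
    also have "\<dots> = 1 / (of_rat (P^4))^2"
      by (simp add: c2 PX of_rat_power power_divide flip: power_mult)
    finally show ?thesis .
  qed
  define Q where "Q = P^4"
  have Qnz: "Q \<noteq> 0" using nz by (simp add: Q_def)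
  have Qc: "(of_rat Q :: complex) \<noteq> 0" using Qnz by simp
  show ?thesis
    unfolding D c16 X0_def[symmetric] X1_def[symmetric] X2_def[symmetric] X3_def[symmetric] X4_def[symmetric]
  proof
    assume "\<exists>w::rat. (of_rat w :: complex)^2 = -3 * Delta' X0 X1 X2 X3 X4"
    then obtain w where w: "(of_rat w :: complex)^2 = -3 * Delta' X0 X1 X2 X3 X4" by blast
    have "(of_rat (w / Q) :: complex)^2 = -3 * (1 / (of_rat (P^4))^2 * Delta' X0 X1 X2 X3 X4)"
      using w Qc by (simp add: of_rat_divide power_divide Q_def field_simps)
    then show "\<exists>w'::rat. (of_rat w' :: complex)^2 = -3 * (1 / (of_rat (P^4))^2 * Delta' X0 X1 X2 X3 X4)" by blast
  next
    assume "\<exists>w'::rat. (of_rat w' :: complex)^2 = -3 * (1 / (of_rat (P^4))^2 * Delta' X0 X1 X2 X3 X4)"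
    then obtain w where w: "(of_rat w :: complex)^2 = -3 * (1 / (of_rat (P^4))^2 * Delta' X0 X1 X2 X3 X4)" by blast
    have "(of_rat (w * Q) :: complex)^2 = -3 * Delta' X0 X1 X2 X3 X4"
      using w Qc by (simp add: of_rat_mult power_mult_distrib Q_def field_simps)
    then show "\<exists>w::rat. (of_rat w :: complex)^2 = -3 * Delta' X0 X1 X2 X3 X4" by blast
  qed
qed

end
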